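(* Let $\Delta\ge 4$ be an integer and for positive integers $i,j$ define \[ F(i,j)=(4\Delta-6)\Bigl(\frac{1}{i}+\frac{1}{j}\Bigr)+\Delta^2-6\Delta+3+\frac{6}{\Delta}-(i-j)^2 . \] Then: (a) for every integer $i$ with $3\le i\le \left\lfloor \frac{\Delta+3}{2}\right\rfloor$, the function $j\mapsto F(i,j)$ on the integers $1\le j\le \Delta$ attains its minimum at $j=\Delta$, i.e. $F(i,j)\ge F(i,\Delta)$ for all $1\le j\le \Delta$; (b) for every integer $i$ with $\left\lfloor \frac{\Delta+3}{2}\right\rfloor+1\le i\le \Delta-1$, the function $j\mapsto F(i,j)$ on the integers $1\le j\le \Delta$ attains its minimum at $j=2$, i.e. $F(i,j)\ge F(i,2)$ for all $1\le j\le \Delta$. *)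

theory Defs
  imports Complex_Main
begin

definition F :: "nat \<Rightarrow> nat \<Rightarrow> nat \<Rightarrow> real" where
  "F D i j = (4 * real D - 6) * (1 / real i + 1 / real j) + (real D)^2 - 6 * real D + 3
             + 6 / real D - (real i - real j)^2"

end

theory Submission
  imports Defs
begin

lemma partA:
  fixes D i j :: nat
  assumes "D \<ge> 4" "3 \<le> i" "2 * i \<le> D + 3" "1 \<le> j" "j \<le> D"
  shows "F D i j \<ge> F D i D"
proof -
  define x where "x = real i"
  define y where "y = real j"
  define d where "d = real D"
  define a where "a = 4 * d - 6"
  have d4: "d \<ge> 4" using assms(1) by (simp add: d_def)
  have y1: "y \<ge> 1" "y \<le> d" using assms by (auto simp: y_def d_def)
  have x2: "2 * x \<le> d + 3" using assms(3) unfolding x_def d_def by linarith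
  have eq: "F D i j - F D i D = (d - y) * (a / (y * d) - (2 * x - y - d))"
    using d4 y1 unfolding F_def x_def[symmetric] y_def[symmetric] d_def[symmetric] a_def
    by (simp add: field_simps power2_eq_square)
  have ad: "a / (y * d) \<ge> 0" using d4 y1 by (simp add: a_def)
  have key: "a / (y * d) \<ge> 2 * x - y - d"
  proof (cases "j \<ge> 3")
    case True
    then have "y \<ge> 3" by (simp add: y_def)
    then show ?thesis using x2 ad by linarith
  next
    case False
    then have "j = 1 \<or> j = 2" using assms(4) by auto
    then show ?thesis
    proof
      assume "j = 1"
      then have "y = 1" by (simp add: y_def)
      moreover have "a / d \<ge> 2" using d4 by (simp add: a_def field_simps)
      ultimately show ?thesis using x2 by simp
    next
      assume "j = 2"
      then have "y = 2" by (simp add: y_def)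
      moreover have "a / (2 * d) \<ge> 1" using d4 by (simp add: a_def field_simps)
      ultimately show ?thesis using x2 by simp
    qed
  qed
  have "(d - y) * (a / (y * d) - (2 * x - y - d)) \<ge> 0"
    using key y1 by (intro mult_nonneg_nonneg) auto
  then show ?thesis using eq by linarith
qed

lemma partB:
  fixes D i j :: nat
  assumes "D \<ge> 4" "2 * i \<ge> D + 4" "i \<le> D - 1" "1 \<le> j" "j \<le> D"
  shows "F D i j \<ge> F D i 2"
proof -
  define x where "x = real i"
  define y where "y = real j"
  define d where "d = real D"
  define a where "a = 4 * d - 6"
  have d4: "d \<ge> 4" using assms(1) by (simp add: d_def)
  have y1: "y \<ge> 1" "y \<le> d" using assms by (auto simp: y_def d_def)
  have x2: "2 * x \<ge> d + 4" using assms(2) unfolding x_def d_def by linarith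
  have x3: "x \<le> d - 1" using assms(3,1) unfolding x_def d_def by linarith
  have eq: "F D i j - F D i 2 = (y - 2) * ((2 * x - y - 2) - a / (2 * y))"
    using d4 y1 unfolding F_def x_def[symmetric] y_def[symmetric] d_def[symmetric] a_def
    by (simp add: field_simps power2_eq_square)
  show ?thesis
  proof (cases "j \<ge> 3")
    case True
    then have y3: "y \<ge> 3" by (simp add: y_def)
    have "(y - 3) * (d - y) \<ge> 0" using y3 y1 by simp
    then have p: "y * (2 * x - y - 2) \<ge> 2 * d - 3"
    proof -
      have "y * (2 * x - y - 2) \<ge> y * (d + 2 - y)"
        using x2 y3 by (intro mult_left_mono) auto
      moreover have "y * (d + 2 - y) \<ge> 2 * d - 3"
        using \<open>(y - 3) * (d - y) \<ge> 0\<close> y1 by (simp add: algebra_simps)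
      ultimately show ?thesis by linarith
    qed
    have "a / (2 * y) \<le> 2 * x - y - 2"
      using p y3 by (simp add: a_def field_simps)
    then have "(y - 2) * ((2 * x - y - 2) - a / (2 * y)) \<ge> 0"
      using y3 by (intro mult_nonneg_nonneg) auto
    then show ?thesis using eq by linarith
  next
    case False
    then have "j = 1 \<or> j = 2" using assms(4) by auto
    then show ?thesis
    proof
      assume "j = 1"
      then have "y = 1" by (simp add: y_def)
      then have "F D i j - F D i 2 \<ge> 0" using eq x3 by (simp add: a_def)
      then show ?thesis by linarith
    next
      assume "j = 2"
      then show ?thesis by simp
    qed
  qed
qed

theorem lemma4p1:
  fixes D :: nat
  assumes "D \<ge> 4"
  shows "(\<forall>i j. 3 \<le> i \<and> i \<le> (D + 3) div 2 \<and> 1 \<le> j \<and> j \<le> D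
            \<longrightarrow> F D i j \<ge> F D i D)
       \<and> (\<forall>i j. (D + 3) div 2 + 1 \<le> i \<and> i \<le> D - 1 \<and> 1 \<le> j \<and> j \<le> D
            \<longrightarrow> F D i j \<ge> F D i 2)"
proof (intro conjI allI impI)
  fix i j assume h: "3 \<le> i \<and> i \<le> (D + 3) div 2 \<and> 1 \<le> j \<and> j \<le> D"
  then have "2 * i \<le> D + 3" by linarith
  then show "F D i j \<ge> F D i D" using partA[OF assms] h by blast
next
  fix i j assume h: "(D + 3) div 2 + 1 \<le> i \<and> i \<le> D - 1 \<and> 1 \<le> j \<and> j \<le> D"
  then have "2 * i \<ge> D + 4" by linarith
  then show "F D i j \<ge> F D i 2" using partB[OF assms] h by blast
qed

end
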